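(* Let $R$, $G$, $*$, $\sigma$ and $\mathcal{S}$ be as in the context, and suppose $\mathcal{S}$ is anticommutative. Let $x,y\in G\setminus G_*$ with $\sigma(y)\neq -1$. Then at least one of the following holds: - $x^y\in\{x,x^*\}$; - $\sigma(xy)=-1$, $xy=x^*y^*$ and $xy^*=x^*y$.
   Context: Throughout, $R$ is a commutative ring with unity with $\operatorname{char}(R)\neq 2$, and $\mathcal{U}(R)$ is its unit group. $G$ is a group with an involution $*$, i.e. a map $x\mapsto x^*$ with $(xy)^*=y^*x^*$ and $(x^* )^*=x$. The map $\sigma:G\to\mathcal{U}(R)$ is a nontrivial group homomorphism with kernel $N=\ker\sigma$, and it is compatible with $*$: $xx^*\in N$ for all $x\in G$. The group ring $RG$ carries the involution $\left(\sum_{x\in G}\alpha_x x\right)^{\sigma*}=\sum_{x\in G}\sigma(x)\alpha_x x^*$. Write $G_*=\{x\in G: x^*=x\}$ and $N_*=G_*\cap N$. Let $\mathcal{S}$ be the $R$-submodule of $RG$ spanned by the union of the following three sets: - $2\mathcal{S}_1=\{2x: x\in N_*\}$; - $\mathcal{S}_2=\{\alpha x: x\in G_*\setminus N,\ \alpha\in R,\ \alpha(1-\sigma(x))=0\}$; - $\mathcal{S}_3=\{x+\sigma(x)x^*: x\in G\setminus G_*\}$. $\mathcal{S}$ is called anticommutative if $ab+ba=0$ for all $a,b\in\mathcal{S}$. The conjugate of $x$ by $y$ is $x^y=y^{-1}xy$. *)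

theory Defs
  imports "HOL-Algebra.Group"
begin

text \<open>Group ring RG: elements are functions G -> R, zero outside carrier G,
  with finite support. Multiplication is convolution.\<close>

definition gr_supp :: "('g, 'm) monoid_scheme \<Rightarrow> ('g \<Rightarrow> 'r::comm_ring_1) \<Rightarrow> 'g set" where
  "gr_supp G a = {x \<in> carrier G. a x \<noteq> 0}"

definition gr_elem :: "('g, 'm) monoid_scheme \<Rightarrow> ('g \<Rightarrow> 'r::comm_ring_1) \<Rightarrow> bool" where
  "gr_elem G a \<longleftrightarrow> finite (gr_supp G a) \<and> (\<forall>z. z \<notin> carrier G \<longrightarrow> a z = 0)"

definition gr_mult :: "('g, 'm) monoid_scheme \<Rightarrow> ('g \<Rightarrow> 'r::comm_ring_1) \<Rightarrow> ('g \<Rightarrow> 'r) \<Rightarrow> ('g \<Rightarrow> 'r)" where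
  "gr_mult G a b = (\<lambda>z. if z \<in> carrier G
      then (\<Sum>x\<in>gr_supp G a. a x * b (inv\<^bsub>G\<^esub> x \<otimes>\<^bsub>G\<^esub> z)) else 0)"

definition gr_add :: "('g \<Rightarrow> 'r::comm_ring_1) \<Rightarrow> ('g \<Rightarrow> 'r) \<Rightarrow> ('g \<Rightarrow> 'r)" where
  "gr_add a b = (\<lambda>z. a z + b z)"

definition gr_smult :: "'r::comm_ring_1 \<Rightarrow> ('g \<Rightarrow> 'r) \<Rightarrow> ('g \<Rightarrow> 'r)" where
  "gr_smult r a = (\<lambda>z. r * a z)"

definition gr_basis :: "'g \<Rightarrow> ('g \<Rightarrow> 'r::comm_ring_1)" where
  "gr_basis x = (\<lambda>z. if z = x then 1 else 0)"

inductive_set gr_span :: "('g \<Rightarrow> 'r::comm_ring_1) set \<Rightarrow> ('g \<Rightarrow> 'r) set"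
  for A :: "('g \<Rightarrow> 'r) set" where
  zero: "(\<lambda>z. 0) \<in> gr_span A"
| step: "g \<in> A \<Longrightarrow> s \<in> gr_span A \<Longrightarrow> gr_add (gr_smult r g) s \<in> gr_span A"

definition group_involution :: "('g, 'm) monoid_scheme \<Rightarrow> ('g \<Rightarrow> 'g) \<Rightarrow> bool" where
  "group_involution G star \<longleftrightarrow>
     (\<forall>x\<in>carrier G. star x \<in> carrier G) \<and>
     (\<forall>x\<in>carrier G. \<forall>y\<in>carrier G. star (x \<otimes>\<^bsub>G\<^esub> y) = star y \<otimes>\<^bsub>G\<^esub> star x) \<and>
     (\<forall>x\<in>carrier G. star (star x) = x)"

definition unit_hom :: "('g, 'm) monoid_scheme \<Rightarrow> ('g \<Rightarrow> 'r::comm_ring_1) \<Rightarrow> bool" where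
  "unit_hom G \<sigma> \<longleftrightarrow> (\<forall>x\<in>carrier G. \<sigma> x dvd 1) \<and>
     (\<forall>x\<in>carrier G. \<forall>y\<in>carrier G. \<sigma> (x \<otimes>\<^bsub>G\<^esub> y) = \<sigma> x * \<sigma> y)"

definition sym_elems :: "('g, 'm) monoid_scheme \<Rightarrow> ('g \<Rightarrow> 'g) \<Rightarrow> 'g set" where
  "sym_elems G star = {x \<in> carrier G. star x = x}"

definition sigma_ker :: "('g, 'm) monoid_scheme \<Rightarrow> ('g \<Rightarrow> 'r::comm_ring_1) \<Rightarrow> 'g set" where
  "sigma_ker G \<sigma> = {x \<in> carrier G. \<sigma> x = 1}"

definition S_gens :: "('g, 'm) monoid_scheme \<Rightarrow> ('g \<Rightarrow> 'g) \<Rightarrow> ('g \<Rightarrow> 'r::comm_ring_1) \<Rightarrow> ('g \<Rightarrow> 'r) set" where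
  "S_gens G star \<sigma> =
     {gr_smult 2 (gr_basis x) | x. x \<in> sym_elems G star \<inter> sigma_ker G \<sigma>}
   \<union> {gr_smult \<alpha> (gr_basis x) | x \<alpha>. x \<in> sym_elems G star - sigma_ker G \<sigma> \<and> \<alpha> * (1 - \<sigma> x) = 0}
   \<union> {gr_add (gr_basis x) (gr_smult (\<sigma> x) (gr_basis (star x))) | x. x \<in> carrier G - sym_elems G star}"

definition S_set :: "('g, 'm) monoid_scheme \<Rightarrow> ('g \<Rightarrow> 'g) \<Rightarrow> ('g \<Rightarrow> 'r::comm_ring_1) \<Rightarrow> ('g \<Rightarrow> 'r) set" where
  "S_set G star \<sigma> = gr_span (S_gens G star \<sigma>)"

definition anticommutative :: "('g, 'm) monoid_scheme \<Rightarrow> ('g \<Rightarrow> 'r::comm_ring_1) set \<Rightarrow> bool" where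
  "anticommutative G S \<longleftrightarrow> (\<forall>a\<in>S. \<forall>b\<in>S. gr_add (gr_mult G a b) (gr_mult G b a) = (\<lambda>z. 0))"

end

theory Submission
  imports Defs
begin

lemma lcan: "group G \<Longrightarrow> a \<in> carrier G \<Longrightarrow> b \<in> carrier G \<Longrightarrow> c \<in> carrier G \<Longrightarrow>
  (a \<otimes>\<^bsub>G\<^esub> b = a \<otimes>\<^bsub>G\<^esub> c) = (b = c)"
  by (metis group.Units_eq monoid.Units_l_cancel group.is_monoid)

lemma rcan: "group G \<Longrightarrow> a \<in> carrier G \<Longrightarrow> b \<in> carrier G \<Longrightarrow> c \<in> carrier G \<Longrightarrow>
  (b \<otimes>\<^bsub>G\<^esub> a = c \<otimes>\<^bsub>G\<^esub> a) = (b = c)"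
  by (simp add: group.right_cancel)

lemma inv_eq: "group G \<Longrightarrow> g \<in> carrier G \<Longrightarrow> z \<in> carrier G \<Longrightarrow> h \<in> carrier G \<Longrightarrow>
  (inv\<^bsub>G\<^esub> g \<otimes>\<^bsub>G\<^esub> z = h) = (z = g \<otimes>\<^bsub>G\<^esub> h)"
  by (simp add: group.inv_solve_left')

lemma conv_gen:
  assumes "group G" "finite S" "S \<subseteq> carrier G" "\<And>w. w \<notin> S \<Longrightarrow> a w = 0" "z \<in> carrier G"
  shows "gr_mult G a b z = (\<Sum>g\<in>S. a g * b (inv\<^bsub>G\<^esub> g \<otimes>\<^bsub>G\<^esub> z))"
proof -
  have "gr_supp G a \<subseteq> S" using assms(4) by (auto simp: gr_supp_def)
  then have "(\<Sum>g\<in>gr_supp G a. a g * b (inv\<^bsub>G\<^esub> g \<otimes>\<^bsub>G\<^esub> z)) = (\<Sum>g\<in>S. a g * b (inv\<^bsub>G\<^esub> g \<otimes>\<^bsub>G\<^esub> z))"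
    by (rule sum.mono_neutral_left[OF assms(2)]) (use assms(3) in \<open>auto simp: gr_supp_def\<close>)
  then show ?thesis using assms(5) by (simp add: gr_mult_def)
qed

definition ind :: "bool \<Rightarrow> 'r::comm_ring_1" where "ind p = (if p then 1 else 0)"

lemma ind_T: "p \<Longrightarrow> ind p = 1" by (simp add: ind_def)
lemma ind_F: "\<not> p \<Longrightarrow> ind p = 0" by (simp add: ind_def)

lemma conv22:
  assumes "group G" "g1 \<in> carrier G" "g2 \<in> carrier G" "h1 \<in> carrier G" "h2 \<in> carrier G"
    "z \<in> carrier G" "g1 \<noteq> g2"
  shows "gr_mult G (gr_add (gr_basis g1) (gr_smult c (gr_basis g2)))
      (gr_add (gr_basis h1) (gr_smult d (gr_basis h2))) z =
    ind (z = g1 \<otimes>\<^bsub>G\<^esub> h1) + d * ind (z = g1 \<otimes>\<^bsub>G\<^esub> h2)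
    + c * ind (z = g2 \<otimes>\<^bsub>G\<^esub> h1) + c * d * ind (z = g2 \<otimes>\<^bsub>G\<^esub> h2)"
proof -
  have "gr_mult G (gr_add (gr_basis g1) (gr_smult c (gr_basis g2)))
      (gr_add (gr_basis h1) (gr_smult d (gr_basis h2))) z =
    (\<Sum>g\<in>{g1,g2}. (gr_add (gr_basis g1) (gr_smult c (gr_basis g2))) g *
       (gr_add (gr_basis h1) (gr_smult d (gr_basis h2))) (inv\<^bsub>G\<^esub> g \<otimes>\<^bsub>G\<^esub> z))"
    by (rule conv_gen) (use assms in \<open>auto simp: gr_add_def gr_smult_def gr_basis_def\<close>)
  also have "\<dots> = ind (z = g1 \<otimes>\<^bsub>G\<^esub> h1) + d * ind (z = g1 \<otimes>\<^bsub>G\<^esub> h2)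
    + c * ind (z = g2 \<otimes>\<^bsub>G\<^esub> h1) + c * d * ind (z = g2 \<otimes>\<^bsub>G\<^esub> h2)"
    using assms by (simp add: gr_add_def gr_smult_def gr_basis_def inv_eq ind_def algebra_simps)
  finally show ?thesis .
qed

lemma conv21:
  assumes "group G" "g1 \<in> carrier G" "g2 \<in> carrier G" "h1 \<in> carrier G"
    "z \<in> carrier G" "g1 \<noteq> g2"
  shows "gr_mult G (gr_add (gr_basis g1) (gr_smult c (gr_basis g2)))
      (gr_smult e (gr_basis h1)) z =
    e * ind (z = g1 \<otimes>\<^bsub>G\<^esub> h1) + c * e * ind (z = g2 \<otimes>\<^bsub>G\<^esub> h1)"
proof -
  have "gr_mult G (gr_add (gr_basis g1) (gr_smult c (gr_basis g2)))
      (gr_smult e (gr_basis h1)) z =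
    (\<Sum>g\<in>{g1,g2}. (gr_add (gr_basis g1) (gr_smult c (gr_basis g2))) g *
       (gr_smult e (gr_basis h1)) (inv\<^bsub>G\<^esub> g \<otimes>\<^bsub>G\<^esub> z))"
    by (rule conv_gen) (use assms in \<open>auto simp: gr_add_def gr_smult_def gr_basis_def\<close>)
  also have "\<dots> = e * ind (z = g1 \<otimes>\<^bsub>G\<^esub> h1) + c * e * ind (z = g2 \<otimes>\<^bsub>G\<^esub> h1)"
    using assms by (simp add: gr_add_def gr_smult_def gr_basis_def inv_eq ind_def algebra_simps)
  finally show ?thesis .
qed

lemma conv12:
  assumes "group G" "g1 \<in> carrier G" "h1 \<in> carrier G" "h2 \<in> carrier G"
    "z \<in> carrier G"
  shows "gr_mult G (gr_smult e (gr_basis g1))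
      (gr_add (gr_basis h1) (gr_smult d (gr_basis h2))) z =
    e * ind (z = g1 \<otimes>\<^bsub>G\<^esub> h1) + e * d * ind (z = g1 \<otimes>\<^bsub>G\<^esub> h2)"
proof -
  have "gr_mult G (gr_smult e (gr_basis g1))
      (gr_add (gr_basis h1) (gr_smult d (gr_basis h2))) z =
    (\<Sum>g\<in>{g1}. (gr_smult e (gr_basis g1)) g *
       (gr_add (gr_basis h1) (gr_smult d (gr_basis h2))) (inv\<^bsub>G\<^esub> g \<otimes>\<^bsub>G\<^esub> z))"
    by (rule conv_gen) (use assms in \<open>auto simp: gr_add_def gr_smult_def gr_basis_def\<close>)
  also have "\<dots> = e * ind (z = g1 \<otimes>\<^bsub>G\<^esub> h1) + e * d * ind (z = g1 \<otimes>\<^bsub>G\<^esub> h2)"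
    using assms by (simp add: gr_add_def gr_smult_def gr_basis_def inv_eq ind_def algebra_simps)
  finally show ?thesis .
qed

lemma gen_in_span: "g \<in> A \<Longrightarrow> g \<in> gr_span A"
proof -
  assume "g \<in> A"
  then have "gr_add (gr_smult 1 g) (\<lambda>z. 0) \<in> gr_span A" by (rule gr_span.step[OF _ gr_span.zero])
  moreover have "gr_add (gr_smult 1 g) (\<lambda>z. 0) = g" by (simp add: gr_add_def gr_smult_def)
  ultimately show ?thesis by simp
qed

lemma unit_cancel: "(u::'r::comm_ring_1) dvd 1 \<Longrightarrow> c * u = 0 \<Longrightarrow> c = 0"
  by (metis dvd_def mult.assoc mult_1_right mult_zero_left)

theorem lemma3p5:
  fixes G :: "('g, 'm) monoid_scheme"
    and star :: "'g \<Rightarrow> 'g"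
    and \<sigma> :: "'g \<Rightarrow> 'r::comm_ring_1"
    and x y :: 'g
  assumes "group G"
    and "CHAR('r) \<noteq> 2"
    and "group_involution G star"
    and "unit_hom G \<sigma>"
    and "\<exists>g\<in>carrier G. \<sigma> g \<noteq> 1"
    and "\<forall>g\<in>carrier G. \<sigma> (g \<otimes>\<^bsub>G\<^esub> star g) = 1"
    and "anticommutative G (S_set G star \<sigma>)"
    and "x \<in> carrier G" and "star x \<noteq> x"
    and "y \<in> carrier G" and "star y \<noteq> y"
    and "\<sigma> y \<noteq> -1"
  shows "inv\<^bsub>G\<^esub> y \<otimes>\<^bsub>G\<^esub> x \<otimes>\<^bsub>G\<^esub> y \<in> {x, star x}
    \<or> (\<sigma> (x \<otimes>\<^bsub>G\<^esub> y) = -1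
        \<and> x \<otimes>\<^bsub>G\<^esub> y = star x \<otimes>\<^bsub>G\<^esub> star y
        \<and> x \<otimes>\<^bsub>G\<^esub> star y = star x \<otimes>\<^bsub>G\<^esub> y)"
proof (rule ccontr)
  assume ng: "\<not> ?thesis"
  note grp = assms(1)
  interpret G: group G by fact
  have two: "(2::'r) \<noteq> 0"
  proof
    assume h: "(2::'r) = 0"
    have "of_nat 2 = (0::'r)" using h by simp
    then have d: "CHAR('r) dvd 2" by (simp only: of_nat_eq_0_iff_char_dvd)
    have "CHAR('r) \<noteq> 0" using d by (metis dvd_0_left_iff zero_neq_numeral)
    moreover have "CHAR('r) \<le> 2" using d \<open>CHAR('r) \<noteq> 0\<close> by (simp add: dvd_imp_le)
    moreover have "CHAR('r) \<noteq> 1"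
    proof
      assume "CHAR('r) = 1"
      then have "of_nat 1 = (0::'r)" by (metis of_nat_CHAR)
      then show False by simp
    qed
    ultimately have "CHAR('r) = 2" by linarith
    with assms(2) show False by simp
  qed
  have stc: "\<And>a. a \<in> carrier G \<Longrightarrow> star a \<in> carrier G"
    and sm: "\<And>a b. a \<in> carrier G \<Longrightarrow> b \<in> carrier G \<Longrightarrow> star (a \<otimes>\<^bsub>G\<^esub> b) = star b \<otimes>\<^bsub>G\<^esub> star a"
    and ss: "\<And>a. a \<in> carrier G \<Longrightarrow> star (star a) = a"
    using assms(3) by (auto simp: group_involution_def)
  have sd: "\<And>a. a \<in> carrier G \<Longrightarrow> \<sigma> a dvd 1"
    and smul: "\<And>a b. a \<in> carrier G \<Longrightarrow> b \<in> carrier G \<Longrightarrow> \<sigma> (a \<otimes>\<^bsub>G\<^esub> b) = \<sigma> a * \<sigma> b"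
    using assms(4) by (auto simp: unit_hom_def)
  define x' where "x' = star x"
  define y' where "y' = star y"
  define u where "u = \<sigma> x"
  define v where "v = \<sigma> y"
  have cx: "x \<in> carrier G" and cy: "y \<in> carrier G" using assms by auto
  have cx': "x' \<in> carrier G" and cy': "y' \<in> carrier G" using stc cx cy x'_def y'_def by auto
  have nx: "x' \<noteq> x" and ny: "y' \<noteq> y" using assms x'_def y'_def by auto
  have ud: "u dvd 1" and vd: "v dvd 1" using sd cx cy u_def v_def by auto
  have u0: "u \<noteq> 0" using ud by auto
  have v0: "v \<noteq> 0" using vd by auto
  note C = cx cy cx' cy' G.m_closed lcan[OF grp] rcan[OF grp]
  define a where "a = gr_add (gr_basis x) (gr_smult u (gr_basis x'))"
  define b where "b = gr_add (gr_basis y) (gr_smult v (gr_basis y'))"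
  have aS: "a \<in> S_set G star \<sigma>" unfolding S_set_def
    by (rule gen_in_span) (use cx nx in \<open>auto simp: S_gens_def a_def x'_def u_def sym_elems_def\<close>)
  have bS: "b \<in> S_set G star \<sigma>" unfolding S_set_def
    by (rule gen_in_span) (use cy ny in \<open>auto simp: S_gens_def b_def y'_def v_def sym_elems_def\<close>)
  have AC: "\<And>p q z. p \<in> S_set G star \<sigma> \<Longrightarrow> q \<in> S_set G star \<sigma> \<Longrightarrow> gr_mult G p q z + gr_mult G q p z = 0"
  proof -
    fix p q z assume "p \<in> S_set G star \<sigma>" "q \<in> S_set G star \<sigma>"
    then have "gr_add (gr_mult G p q) (gr_mult G q p) = (\<lambda>z. 0)"
      using assms(7) by (auto simp: anticommutative_def)
    then show "gr_mult G p q z + gr_mult G q p z = 0" by (metis gr_add_def)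
  qed
  have E: "\<And>z. z \<in> carrier G \<Longrightarrow>
    ind (z = x \<otimes>\<^bsub>G\<^esub> y) + v * ind (z = x \<otimes>\<^bsub>G\<^esub> y') + u * ind (z = x' \<otimes>\<^bsub>G\<^esub> y) + u * v * ind (z = x' \<otimes>\<^bsub>G\<^esub> y')
    + (ind (z = y \<otimes>\<^bsub>G\<^esub> x) + u * ind (z = y \<otimes>\<^bsub>G\<^esub> x') + v * ind (z = y' \<otimes>\<^bsub>G\<^esub> x) + v * u * ind (z = y' \<otimes>\<^bsub>G\<^esub> x')) = 0"
  proof -
    fix z assume cz: "z \<in> carrier G"
    have "gr_mult G a b z + gr_mult G b a z = 0" by (rule AC[OF aS bS])
    then show "?thesis z" unfolding a_def b_def
      by (simp only: conv22[OF grp cx cx' cy cy' cz nx[symmetric]] conv22[OF grp cy cy' cx cx' cz ny[symmetric]])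
  qed
  have F: "\<And>z. z \<in> carrier G \<Longrightarrow>
    2 * (ind (z = x \<otimes>\<^bsub>G\<^esub> x) + u * ind (z = x \<otimes>\<^bsub>G\<^esub> x') + u * ind (z = x' \<otimes>\<^bsub>G\<^esub> x) + u * u * ind (z = x' \<otimes>\<^bsub>G\<^esub> x')) = 0"
  proof -
    fix z assume cz: "z \<in> carrier G"
    have "gr_mult G a a z + gr_mult G a a z = 0" by (rule AC[OF aS aS])
    then show "?thesis z" unfolding a_def
      by (simp only: conv22[OF grp cx cx' cx cx' cz nx[symmetric]] mult_2)
  qed
  have comm: "x \<otimes>\<^bsub>G\<^esub> x' = x' \<otimes>\<^bsub>G\<^esub> x"
  proof (rule ccontr)
    assume h: "x \<otimes>\<^bsub>G\<^esub> x' \<noteq> x' \<otimes>\<^bsub>G\<^esub> x"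
    have "2 * u = 0" using F[of "x \<otimes>\<^bsub>G\<^esub> x'"] h nx by (simp add: C ind_def)
    then show False using unit_cancel[OF ud] two by blast
  qed
  have four: "(4::'r) = 0"
  proof -
    have "4 * u = 0" using F[of "x \<otimes>\<^bsub>G\<^esub> x'"] comm nx by (simp add: C ind_def)
    then show ?thesis using unit_cancel[OF ud] by blast
  qed
  have sq: "x \<otimes>\<^bsub>G\<^esub> x = x' \<otimes>\<^bsub>G\<^esub> x'"
  proof (rule ccontr)
    assume h: "x \<otimes>\<^bsub>G\<^esub> x \<noteq> x' \<otimes>\<^bsub>G\<^esub> x'"
    have "2 = (0::'r)" using F[of "x \<otimes>\<^bsub>G\<^esub> x"] h nx by (simp add: C ind_def)
    then show False using two by blast
  qed
  have B1: "x \<otimes>\<^bsub>G\<^esub> y' = x' \<otimes>\<^bsub>G\<^esub> y" if h: "x \<otimes>\<^bsub>G\<^esub> y = x' \<otimes>\<^bsub>G\<^esub> y'"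
  proof -
    have "x' \<otimes>\<^bsub>G\<^esub> (x \<otimes>\<^bsub>G\<^esub> y') = (x' \<otimes>\<^bsub>G\<^esub> x) \<otimes>\<^bsub>G\<^esub> y'" by (simp add: C G.m_assoc)
    also have "\<dots> = (x \<otimes>\<^bsub>G\<^esub> x') \<otimes>\<^bsub>G\<^esub> y'" by (simp only: comm)
    also have "\<dots> = x \<otimes>\<^bsub>G\<^esub> (x' \<otimes>\<^bsub>G\<^esub> y')" by (simp add: C G.m_assoc)
    also have "\<dots> = x \<otimes>\<^bsub>G\<^esub> (x \<otimes>\<^bsub>G\<^esub> y)" by (simp only: h)
    also have "\<dots> = (x \<otimes>\<^bsub>G\<^esub> x) \<otimes>\<^bsub>G\<^esub> y" by (simp add: C G.m_assoc)
    also have "\<dots> = (x' \<otimes>\<^bsub>G\<^esub> x') \<otimes>\<^bsub>G\<^esub> y" by (simp only: sq)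
    also have "\<dots> = x' \<otimes>\<^bsub>G\<^esub> (x' \<otimes>\<^bsub>G\<^esub> y)" by (simp add: C G.m_assoc)
    finally show ?thesis by (simp add: C)
  qed
  have nc1: "x \<otimes>\<^bsub>G\<^esub> y \<noteq> y \<otimes>\<^bsub>G\<^esub> x"
  proof
    assume h: "x \<otimes>\<^bsub>G\<^esub> y = y \<otimes>\<^bsub>G\<^esub> x"
    have "inv\<^bsub>G\<^esub> y \<otimes>\<^bsub>G\<^esub> x \<otimes>\<^bsub>G\<^esub> y = inv\<^bsub>G\<^esub> y \<otimes>\<^bsub>G\<^esub> (y \<otimes>\<^bsub>G\<^esub> x)"
      by (simp add: C G.m_assoc h)
    also have "\<dots> = x" by (simp add: C G.m_assoc[symmetric])
    finally show False using ng by simp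
  qed
  have nc2: "x \<otimes>\<^bsub>G\<^esub> y \<noteq> y \<otimes>\<^bsub>G\<^esub> x'"
  proof
    assume h: "x \<otimes>\<^bsub>G\<^esub> y = y \<otimes>\<^bsub>G\<^esub> x'"
    have "inv\<^bsub>G\<^esub> y \<otimes>\<^bsub>G\<^esub> x \<otimes>\<^bsub>G\<^esub> y = inv\<^bsub>G\<^esub> y \<otimes>\<^bsub>G\<^esub> (y \<otimes>\<^bsub>G\<^esub> x')"
      by (simp add: C G.m_assoc h)
    also have "\<dots> = x'" by (simp add: C G.m_assoc[symmetric])
    finally show False using ng x'_def by simp
  qed
  have Exy: "1 + u * v * ind (x \<otimes>\<^bsub>G\<^esub> y = x' \<otimes>\<^bsub>G\<^esub> y') + v * ind (x \<otimes>\<^bsub>G\<^esub> y = y' \<otimes>\<^bsub>G\<^esub> x)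
     + v * u * ind (x \<otimes>\<^bsub>G\<^esub> y = y' \<otimes>\<^bsub>G\<^esub> x') = 0"
  proof -
    have "ind (x \<otimes>\<^bsub>G\<^esub> y = x \<otimes>\<^bsub>G\<^esub> y') = (0::'r)" using ny by (intro ind_F) (simp add: C)
    moreover have "ind (x \<otimes>\<^bsub>G\<^esub> y = x' \<otimes>\<^bsub>G\<^esub> y) = (0::'r)" using nx by (intro ind_F) (simp add: C)
    moreover have "ind (x \<otimes>\<^bsub>G\<^esub> y = y \<otimes>\<^bsub>G\<^esub> x) = (0::'r)" using nc1 by (intro ind_F) simp
    moreover have "ind (x \<otimes>\<^bsub>G\<^esub> y = y \<otimes>\<^bsub>G\<^esub> x') = (0::'r)" using nc2 by (intro ind_F) simp
    moreover have "ind (x \<otimes>\<^bsub>G\<^esub> y = x \<otimes>\<^bsub>G\<^esub> y) = (1::'r)" by (intro ind_T) simp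
    ultimately show ?thesis using E[of "x \<otimes>\<^bsub>G\<^esub> y"] by (simp add: C algebra_simps)
  qed
  show False
  proof (cases "x \<otimes>\<^bsub>G\<^esub> y = y' \<otimes>\<^bsub>G\<^esub> x")
    case True
    have n8: "x \<otimes>\<^bsub>G\<^esub> y \<noteq> y' \<otimes>\<^bsub>G\<^esub> x'" using True nx by (simp add: C)
    have q1: "x \<otimes>\<^bsub>G\<^esub> y = x' \<otimes>\<^bsub>G\<^esub> y'"
    proof (rule ccontr)
      assume "x \<otimes>\<^bsub>G\<^esub> y \<noteq> x' \<otimes>\<^bsub>G\<^esub> y'"
      then have "1 + v = 0" using Exy True n8 by (simp add: ind_def)
      then have "v = -1" by (simp only: eq_neg_iff_add_eq_0 add.commute)
      with assms(12) v_def show False by simp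
    qed
    have e1: "1 + u * v + v = 0" using Exy True n8 q1 by (simp add: ind_def)
    have t2: "x \<otimes>\<^bsub>G\<^esub> y' = x' \<otimes>\<^bsub>G\<^esub> y" using B1 q1 by blast
    have t3: "y' \<otimes>\<^bsub>G\<^esub> x' = x' \<otimes>\<^bsub>G\<^esub> y"
      using arg_cong[OF True, of star] sm[OF cx cy] sm[OF cy' cx] ss[OF cy] x'_def y'_def by simp
    have t8: "y' \<otimes>\<^bsub>G\<^esub> x' = y \<otimes>\<^bsub>G\<^esub> x"
      using arg_cong[OF q1, of star] sm[OF cx cy] sm[OF cx' cy'] ss[OF cy] ss[OF cx] x'_def y'_def by simp
    have "u + v + u * v + 1 = 0"
    proof -
      have "ind (y \<otimes>\<^bsub>G\<^esub> x = x \<otimes>\<^bsub>G\<^esub> y) = (0::'r)" using nc1 by (simp add: ind_def)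
      moreover have "ind (y \<otimes>\<^bsub>G\<^esub> x = x \<otimes>\<^bsub>G\<^esub> y') = (1::'r)" using t2 t3 t8 by (simp add: ind_def)
      moreover have "ind (y \<otimes>\<^bsub>G\<^esub> x = x' \<otimes>\<^bsub>G\<^esub> y) = (1::'r)" using t3 t8 by (simp add: ind_def)
      moreover have "ind (y \<otimes>\<^bsub>G\<^esub> x = x' \<otimes>\<^bsub>G\<^esub> y') = (0::'r)" using q1 nc1 by (simp add: ind_def)
      moreover have "ind (y \<otimes>\<^bsub>G\<^esub> x = y \<otimes>\<^bsub>G\<^esub> x') = (0::'r)" using nx by (simp add: ind_def C)
      moreover have "ind (y \<otimes>\<^bsub>G\<^esub> x = y' \<otimes>\<^bsub>G\<^esub> x) = (0::'r)" using True nc1 by (simp add: ind_def)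
      moreover have "ind (y \<otimes>\<^bsub>G\<^esub> x = y' \<otimes>\<^bsub>G\<^esub> x') = (1::'r)" using t8 by (simp add: ind_def)
      ultimately show ?thesis using E[of "y \<otimes>\<^bsub>G\<^esub> x"] by (simp add: C ind_def algebra_simps)
    qed
    moreover have "u = (u + v + u * v + 1) - (1 + u * v + v)" by (simp add: algebra_simps)
    ultimately have "u = 0" using e1 by simp
    with u0 show False by simp
  next
    case False
    have Exy2: "1 + u * v * ind (x \<otimes>\<^bsub>G\<^esub> y = x' \<otimes>\<^bsub>G\<^esub> y') + u * v * ind (x \<otimes>\<^bsub>G\<^esub> y = y' \<otimes>\<^bsub>G\<^esub> x') = 0"
      using Exy False by (simp add: ind_def algebra_simps)
    show False
    proof (cases "x \<otimes>\<^bsub>G\<^esub> y = x' \<otimes>\<^bsub>G\<^esub> y'")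
      case q1: True
      show False
      proof (cases "x \<otimes>\<^bsub>G\<^esub> y = y' \<otimes>\<^bsub>G\<^esub> x'")
        case True
        have e: "1 + u * v * 1 + u * v * 1 = 0" using Exy2 by (simp only: ind_T[OF q1] ind_T[OF True])
        have "2 + 4 * (u * v) = 2 * (1 + u * v * 1 + u * v * 1)" by (simp add: algebra_simps)
        with e have "2 + 4 * (u * v) = (0::'r)" by simp
        with four two show False by simp
      next
        case False
        have e: "1 + u * v * 1 + u * v * 0 = 0" using Exy2 by (simp only: ind_T[OF q1] ind_F[OF False])
        then have uv: "u * v = -1" by (simp add: eq_neg_iff_add_eq_0 add.commute)
        have "\<sigma> (x \<otimes>\<^bsub>G\<^esub> y) = -1" using smul[OF cx cy] uv u_def v_def by simp
        then show False using ng q1 B1[OF q1] x'_def y'_def by simp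
      qed
    next
      case nq1: False
      have q2: "x \<otimes>\<^bsub>G\<^esub> y = y' \<otimes>\<^bsub>G\<^esub> x'"
      proof (rule ccontr)
        assume h: "x \<otimes>\<^bsub>G\<^esub> y \<noteq> y' \<otimes>\<^bsub>G\<^esub> x'"
        have e: "1 + u * v * 0 + u * v * 0 = 0" using Exy2 by (simp only: ind_F[OF nq1] ind_F[OF h])
        then show False by simp
      qed
      have e: "1 + u * v * 0 + u * v * 1 = 0" using Exy2 by (simp only: ind_F[OF nq1] ind_T[OF q2])
      then have uv: "u * v = -1" by (simp add: eq_neg_iff_add_eq_0 add.commute)
      have sxy: "\<sigma> (x \<otimes>\<^bsub>G\<^esub> y) = -1" using smul[OF cx cy] uv u_def v_def by simp
      have cxy: "x \<otimes>\<^bsub>G\<^esub> y \<in> carrier G" by (simp add: C)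
      have symxy: "star (x \<otimes>\<^bsub>G\<^esub> y) = x \<otimes>\<^bsub>G\<^esub> y" using sm[OF cx cy] q2 x'_def y'_def by simp
      have m11: "(-1::'r) \<noteq> 1"
      proof
        assume "(-1::'r) = 1"
        then have "(2::'r) = 0" by (metis one_add_one add_eq_0_iff2 eq_neg_iff_add_eq_0)
        with two show False by simp
      qed
      have cS: "gr_smult 2 (gr_basis (x \<otimes>\<^bsub>G\<^esub> y)) \<in> S_set G star \<sigma>" unfolding S_set_def
      proof (rule gen_in_span)
        have "(2::'r) * (1 - \<sigma> (x \<otimes>\<^bsub>G\<^esub> y)) = 4" using sxy by simp
        then have "(2::'r) * (1 - \<sigma> (x \<otimes>\<^bsub>G\<^esub> y)) = 0" using four by simp
        moreover have "x \<otimes>\<^bsub>G\<^esub> y \<in> sym_elems G star - sigma_ker G \<sigma>"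
          using cxy symxy sxy m11 by (auto simp: sym_elems_def sigma_ker_def)
        ultimately show "gr_smult 2 (gr_basis (x \<otimes>\<^bsub>G\<^esub> y)) \<in> S_gens G star \<sigma>"
          unfolding S_gens_def by blast
      qed
      define z where "z = x \<otimes>\<^bsub>G\<^esub> (x \<otimes>\<^bsub>G\<^esub> y)"
      have cz: "z \<in> carrier G" by (simp add: z_def C)
      have "gr_mult G a (gr_smult 2 (gr_basis (x \<otimes>\<^bsub>G\<^esub> y))) z + gr_mult G (gr_smult 2 (gr_basis (x \<otimes>\<^bsub>G\<^esub> y))) a z = 0"
        by (rule AC[OF aS cS])
      then have H: "2 * ind (z = x \<otimes>\<^bsub>G\<^esub> (x \<otimes>\<^bsub>G\<^esub> y)) + u * 2 * ind (z = x' \<otimes>\<^bsub>G\<^esub> (x \<otimes>\<^bsub>G\<^esub> y))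
        + (2 * ind (z = (x \<otimes>\<^bsub>G\<^esub> y) \<otimes>\<^bsub>G\<^esub> x) + 2 * u * ind (z = (x \<otimes>\<^bsub>G\<^esub> y) \<otimes>\<^bsub>G\<^esub> x')) = 0"
        unfolding a_def
        by (simp only: conv21[OF grp cx cx' cxy cz nx[symmetric]] conv12[OF grp cxy cx cx' cz])
      have f1: "z \<noteq> x' \<otimes>\<^bsub>G\<^esub> (x \<otimes>\<^bsub>G\<^esub> y)" using nx by (simp add: z_def C)
      have f2: "z \<noteq> (x \<otimes>\<^bsub>G\<^esub> y) \<otimes>\<^bsub>G\<^esub> x" using nc1 by (simp add: z_def C G.m_assoc)
      have f3: "z \<noteq> (x \<otimes>\<^bsub>G\<^esub> y) \<otimes>\<^bsub>G\<^esub> x'" using nc2 by (simp add: z_def C G.m_assoc)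
      have "(2::'r) = 0" using H f1 f2 f3 by (simp add: ind_def z_def)
      with two show False by simp
    qed
  qed
qed

end
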